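(* Let $K\ge2$ and $M\le N$ be positive integers with $KM>N$, and let $\mathbf{A}_1,\dots,\mathbf{A}_K\in\mathbb{C}^{N\times M}$ be independent random matrices whose entries are drawn from a continuous distribution. Let $\mathbf{A}=[\mathbf{A}_1,\dots,\mathbf{A}_K]\in\mathbb{C}^{N\times KM}$, let the columns of $\mathbf{U}\in\mathbb{C}^{KM\times(KM-N)}$ form a basis of $\mathrm{null}(\mathbf{A})$, write $\mathbf{U}=[\mathbf{U}_1^T,\dots,\mathbf{U}_K^T]^T$ with $\mathbf{U}_i\in\mathbb{C}^{M\times(KM-N)}$, and set $\tilde{\mathbf{A}}=[\mathbf{A}_1\mathbf{U}_1,\dots,\mathbf{A}_K\mathbf{U}_K]\in\mathbb{C}^{N\times K(KM-N)}$. Then, with probability one, $\mathrm{rank}(\tilde{\mathbf{A}})=\min\big((K-1)(KM-N),\,N\big)$. *)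

theory Defs
  imports "HOL-Probability.Probability" "Jordan_Normal_Form.DL_Rank" "Jordan_Normal_Form.Matrix_Kernel"
begin

text \<open>A random input is a family of complex entries a (k,i,j), for block k < K,
  row i < N, column j < M: the (i,j) entry of A_(k+1) (0-based indices).\<close>

definition entry_space :: "nat \<Rightarrow> nat \<Rightarrow> nat \<Rightarrow> (nat \<times> nat \<times> nat \<Rightarrow> complex) measure" where
  "entry_space K N M = PiM ({..<K} \<times> {..<N} \<times> {..<M}) (\<lambda>_. lborel)"

definition Ablock :: "nat \<Rightarrow> nat \<Rightarrow> (nat \<times> nat \<times> nat \<Rightarrow> complex) \<Rightarrow> nat \<Rightarrow> complex mat" where
  "Ablock N M a k = mat N M (\<lambda>(i,j). a (k,i,j))"

definition Amat :: "nat \<Rightarrow> nat \<Rightarrow> nat \<Rightarrow> (nat \<times> nat \<times> nat \<Rightarrow> complex) \<Rightarrow> complex mat" where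
  "Amat K N M a = mat N (K * M) (\<lambda>(i,j). Ablock N M a (j div M) $$ (i, j mod M))"

definition null_basis_mat :: "complex mat \<Rightarrow> complex mat \<Rightarrow> nat \<Rightarrow> bool" where
  "null_basis_mat A U r \<longleftrightarrow>
     U \<in> carrier_mat (dim_col A) r \<and> distinct (cols U) \<and>
     module.lin_indpt class_ring (module_vec TYPE(complex) (dim_col A)) (set (cols U)) \<and>
     module.span class_ring (module_vec TYPE(complex) (dim_col A)) (set (cols U)) = mat_kernel A"

definition Ublock :: "nat \<Rightarrow> complex mat \<Rightarrow> nat \<Rightarrow> complex mat" where
  "Ublock M U k = mat M (dim_col U) (\<lambda>(i,j). U $$ (k * M + i, j))"

definition Atilde :: "nat \<Rightarrow> nat \<Rightarrow> nat \<Rightarrow> (nat \<times> nat \<times> nat \<Rightarrow> complex) \<Rightarrow> complex mat \<Rightarrow> complex mat" where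
  "Atilde K N M a U = (let r = K * M - N in
     mat N (K * r) (\<lambda>(i,j). (Ablock N M a (j div r) * Ublock M U (j div r)) $$ (i, j mod r)))"

end

theory Submission
  imports Defs "Jordan_Normal_Form.DL_Rank_Submatrix" "HOL-Computational_Algebra.Polynomial"
begin

inductive_set pf :: "'i set \<Rightarrow> (('i \<Rightarrow> complex) \<Rightarrow> complex) set" for I :: "'i set" where
  pf_const: "(\<lambda>_. c) \<in> pf I"
| pf_proj: "i \<in> I \<Longrightarrow> (\<lambda>a. a i) \<in> pf I"
| pf_add: "f \<in> pf I \<Longrightarrow> g \<in> pf I \<Longrightarrow> (\<lambda>a. f a + g a) \<in> pf I"
| pf_mult: "f \<in> pf I \<Longrightarrow> g \<in> pf I \<Longrightarrow> (\<lambda>a. f a * g a) \<in> pf I"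

lemma pf_minus: "f \<in> pf I \<Longrightarrow> g \<in> pf I \<Longrightarrow> (\<lambda>a. f a - g a) \<in> pf I"
proof -
  assume "f \<in> pf I" "g \<in> pf I"
  then have "(\<lambda>a. f a + (-1) * g a) \<in> pf I" by (intro pf_add pf_mult pf_const)
  then show ?thesis by simp
qed

lemma pf_uminus: "f \<in> pf I \<Longrightarrow> (\<lambda>a. - f a) \<in> pf I"
  using pf_minus[OF pf_const, of f I 0] by simp

lemma pf_sum: "finite S \<Longrightarrow> (\<And>s. s \<in> S \<Longrightarrow> f s \<in> pf I) \<Longrightarrow> (\<lambda>a. \<Sum>s\<in>S. f s a) \<in> pf I"
proof (induction S rule: finite_induct)
  case empty
  then show ?case using pf_const[of 0] by simp
next
  case (insert x F)
  then show ?case by (simp add: pf_add)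
qed

lemma pf_prod: "finite S \<Longrightarrow> (\<And>s. s \<in> S \<Longrightarrow> f s \<in> pf I) \<Longrightarrow> (\<lambda>a. \<Prod>s\<in>S. f s a) \<in> pf I"
proof (induction S rule: finite_induct)
  case empty
  then show ?case using pf_const[of 1] by simp
next
  case (insert x F)
  then show ?case by (simp add: pf_mult)
qed

lemma pf_dep: "f \<in> pf I \<Longrightarrow> (\<And>i. i \<in> I \<Longrightarrow> a i = b i) \<Longrightarrow> f a = f b"
  by (induction rule: pf.induct) auto

lemma pf_mono: "f \<in> pf I \<Longrightarrow> I \<subseteq> J \<Longrightarrow> f \<in> pf J"
  by (induction rule: pf.induct) (auto intro: pf.intros)

lemma pf_meas: "f \<in> pf I \<Longrightarrow> f \<in> borel_measurable (PiM I (\<lambda>_. lborel))"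
proof (induction rule: pf.induct)
  case (pf_proj i)
  then have "(\<lambda>a. a i) \<in> measurable (PiM I (\<lambda>_. lborel)) lborel"
    by (rule measurable_component_singleton)
  then show ?case by simp
qed auto

lemma sum_if_less: "(n1::nat) \<le> n \<Longrightarrow> (\<Sum>k<n. if k < n1 then g k else 0) = (\<Sum>k<n1. (g k :: 'a::comm_monoid_add))"
  by (rule sum.mono_neutral_cong_right) auto

lemma poly_sum_lt:
  fixes r :: "complex poly"
  assumes "\<And>m. m \<ge> N \<Longrightarrow> coeff r m = 0"
  shows "poly r x = (\<Sum>m<N. coeff r m * x ^ m)"
proof (cases "degree r < N")
  case True
  have "poly r x = (\<Sum>i\<le>degree r. coeff r i * x ^ i)" by (rule poly_altdef)
  also have "\<dots> = (\<Sum>m<N. coeff r m * x ^ m)"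
    apply (rule sum.mono_neutral_left)
    using True by (auto simp: coeff_eq_0)
  finally show ?thesis .
next
  case False
  then have "coeff r (degree r) = 0" using assms by simp
  then have "r = 0" by simp
  then show ?thesis by simp
qed

lemma cauchy_fin:
  fixes g h :: "nat \<Rightarrow> complex"
  shows "(\<Sum>k<n1. g k * x ^ k) * (\<Sum>l<n2. h l * x ^ l) =
    (\<Sum>m<n1+n2. (\<Sum>k\<le>m. (if k < n1 then g k else 0) * (if m - k < n2 then h (m - k) else 0)) * x ^ m)"
proof -
  define p where "p = (\<Sum>k<n1. monom (g k) k)"
  define q where "q = (\<Sum>k<n2. monom (h k) k)"
  have cp: "coeff p k = (if k < n1 then g k else 0)" for k
    unfolding p_def coeff_sum coeff_monom
    by (cases "k < n1") (auto simp: sum.delta)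
  have cq: "coeff q k = (if k < n2 then h k else 0)" for k
    unfolding q_def coeff_sum coeff_monom
    by (cases "k < n2") (auto simp: sum.delta)
  have pp: "poly p x = (\<Sum>k<n1. g k * x ^ k)" unfolding p_def poly_sum poly_monom by simp
  have pq: "poly q x = (\<Sum>k<n2. h k * x ^ k)" unfolding q_def poly_sum poly_monom by simp
  have cpq: "coeff (p * q) m = (\<Sum>k\<le>m. (if k < n1 then g k else 0) * (if m - k < n2 then h (m - k) else 0))" for m
    unfolding coeff_mult cp cq by simp
  have z: "coeff (p * q) m = 0" if "m \<ge> n1 + n2" for m
    unfolding cpq using that by (intro sum.neutral) auto
  have "poly (p * q) x = (\<Sum>m<n1+n2. coeff (p*q) m * x ^ m)"
    by (rule poly_sum_lt) (use z in auto)
  then show ?thesis unfolding poly_mult pp pq cpq .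
qed

lemma pf_decomp:
  assumes "f \<in> pf (insert i J)" "i \<notin> J"
  shows "\<exists>n c. (\<forall>k. c k \<in> pf J) \<and> (\<forall>a. f a = (\<Sum>k<n. c k a * a i ^ k))"
  using assms(1)
proof (induction rule: pf.induct)
  case (pf_const c)
  show ?case
    by (rule exI[of _ 1], rule exI[of _ "\<lambda>k. (\<lambda>_. c)"]) (auto intro: pf.intros)
next
  case (pf_proj j)
  show ?case
  proof (cases "j = i")
    case True
    show ?thesis
      by (rule exI[of _ 2], rule exI[of _ "\<lambda>k. if k = 1 then (\<lambda>_. 1) else (\<lambda>_. 0)"])
         (auto intro: pf.intros simp: True numeral_2_eq_2)
  next
    case False
    then have "j \<in> J" using pf_proj by auto
    show ?thesis
      by (rule exI[of _ 1], rule exI[of _ "\<lambda>k. (\<lambda>a. a j)"]) (auto intro: pf.intros \<open>j \<in> J\<close>)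
  qed
next
  case (pf_add f g)
  then obtain n1 c1 n2 c2 where h1: "\<forall>k. c1 k \<in> pf J" "\<forall>a. f a = (\<Sum>k<n1. c1 k a * a i ^ k)"
    and h2: "\<forall>k. c2 k \<in> pf J" "\<forall>a. g a = (\<Sum>k<n2. c2 k a * a i ^ k)" by blast
  define c1' where "c1' k = (if k < n1 then c1 k else (\<lambda>_. 0))" for k
  define c2' where "c2' k = (if k < n2 then c2 k else (\<lambda>_. 0))" for k
  have p1: "c1' k \<in> pf J" for k unfolding c1'_def using h1 by (auto intro: pf.intros)
  have p2: "c2' k \<in> pf J" for k unfolding c2'_def using h2 by (auto intro: pf.intros)
  show ?case
  proof (intro exI conjI allI)
    show "(\<lambda>a. c1' k a + c2' k a) \<in> pf J" for k using p1 p2 by (rule pf.intros)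
    fix a
    have e1: "(\<Sum>k<max n1 n2. c1' k a * a i ^ k) = (\<Sum>k<n1. c1 k a * a i ^ k)"
    proof -
      have "c1' k a * a i ^ k = (if k < n1 then c1 k a * a i ^ k else 0)" for k by (simp add: c1'_def)
      then show ?thesis using sum_if_less[of n1 "max n1 n2" "\<lambda>k. c1 k a * a i ^ k"] by simp
    qed
    have e2: "(\<Sum>k<max n1 n2. c2' k a * a i ^ k) = (\<Sum>k<n2. c2 k a * a i ^ k)"
    proof -
      have "c2' k a * a i ^ k = (if k < n2 then c2 k a * a i ^ k else 0)" for k by (simp add: c2'_def)
      then show ?thesis using sum_if_less[of n2 "max n1 n2" "\<lambda>k. c2 k a * a i ^ k"] by simp
    qed
    show "f a + g a = (\<Sum>k<max n1 n2. (c1' k a + c2' k a) * a i ^ k)"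
      using h1 h2 e1 e2 by (simp add: distrib_right sum.distrib)
  qed
next
  case (pf_mult f g)
  then obtain n1 c1 n2 c2 where h1: "\<forall>k. c1 k \<in> pf J" "\<forall>a. f a = (\<Sum>k<n1. c1 k a * a i ^ k)"
    and h2: "\<forall>k. c2 k \<in> pf J" "\<forall>a. g a = (\<Sum>k<n2. c2 k a * a i ^ k)" by blast
  define c1' where "c1' k = (if k < n1 then c1 k else (\<lambda>_. 0))" for k
  define c2' where "c2' k = (if k < n2 then c2 k else (\<lambda>_. 0))" for k
  have p1: "c1' k \<in> pf J" for k unfolding c1'_def using h1 by (auto intro: pf.intros)
  have p2: "c2' k \<in> pf J" for k unfolding c2'_def using h2 by (auto intro: pf.intros)
  show ?case
  proof (intro exI conjI allI)
    show "(\<lambda>a. \<Sum>k\<le>m. c1' k a * c2' (m - k) a) \<in> pf J" for m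
      by (rule pf_sum) (auto intro!: pf.pf_mult[OF p1 p2])
    fix a
    show "f a * g a = (\<Sum>m<n1+n2. (\<Sum>k\<le>m. c1' k a * c2' (m - k) a) * a i ^ m)"
      unfolding h1(2)[rule_format] h2(2)[rule_format] cauchy_fin c1'_def c2'_def
      by (intro sum.cong refl arg_cong2[where f="(*)"]) auto
  qed
qed

interpretation pl: product_sigma_finite "\<lambda>_::'i. (lborel :: complex measure)"
  by (rule product_sigma_finite.intro) (rule sigma_finite_lborel)

lemma pf_null:
  assumes "finite I"
  shows "f \<in> pf I \<Longrightarrow> f a0 \<noteq> 0 \<Longrightarrow>
    {a \<in> space (PiM I (\<lambda>_. lborel)). f a = 0} \<in> null_sets (PiM I (\<lambda>_. lborel :: complex measure))"
  using assms
proof (induction I arbitrary: f rule: finite_induct)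
  case empty
  have "f a \<noteq> 0" for a using pf_dep[OF empty(1), of a a0] empty(2) by auto
  then have e: "{a \<in> space (PiM {} (\<lambda>_. lborel)). f a = 0} = {}" by auto
  show ?case by (subst e) simp
next
  case (insert i J)
  obtain n c where c: "\<And>k. c k \<in> pf J" "\<And>a. f a = (\<Sum>k<n. c k a * a i ^ k)"
    using pf_decomp[OF insert(4) insert(2)] by blast
  from insert(5) obtain k where k: "k < n" "c k a0 \<noteq> 0"
    unfolding c(2) by (metis (no_types, lifting) mult_eq_0_iff sum.neutral lessThan_iff)
  have Nk: "{x \<in> space (PiM J (\<lambda>_. lborel)). c k x = 0} \<in> null_sets (PiM J (\<lambda>_. lborel :: complex measure))"
    using insert(3)[OF c(1) k(2)] .
  have fm: "f \<in> borel_measurable (PiM (insert i J) (\<lambda>_. lborel))" by (rule pf_meas[OF insert(4)])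
  define Z where "Z = {a \<in> space (PiM (insert i J) (\<lambda>_. lborel)). f a = 0}"
  have Zs: "Z \<in> sets (PiM (insert i J) (\<lambda>_. lborel :: complex measure))"
    unfolding Z_def using fm by measurable
  have sec: "(\<integral>\<^sup>+ y. indicator Z (x(i := y)) \<partial>lborel) = 0"
    if x: "x \<in> space (PiM J (\<lambda>_. lborel))" "c k x \<noteq> 0" for x
  proof -
    define p where "p = (\<Sum>j<n. monom (c j x) j)"
    have cp: "coeff p k = c k x"
      unfolding p_def coeff_sum coeff_monom using k(1) by (simp add: sum.delta)
    then have "p \<noteq> 0" using x(2) by auto
    then have fin: "finite {y. poly p y = 0}" by (rule poly_roots_finite)
    have cdep: "c j (x(i := y)) = c j x" for j y
      by (rule pf_dep[OF c(1)]) (use insert(2) in auto)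
    have "{y. x(i := y) \<in> Z} \<subseteq> {y. poly p y = 0}"
      unfolding Z_def p_def poly_sum poly_monom c(2) by (auto simp: cdep)
    then have nl: "{y. x(i := y) \<in> Z} \<in> null_sets lborel"
      using fin by (meson finite_imp_null_set_lborel finite_subset)
    have eq: "(\<lambda>y. indicator Z (x(i := y))) = indicator {y. x(i := y) \<in> Z}"
      by (auto simp: indicator_def)
    have "(\<integral>\<^sup>+ y. indicator Z (x(i := y)) \<partial>lborel) = emeasure lborel {y. x(i := y) \<in> Z}"
      unfolding eq by (rule nn_integral_indicator) (rule null_setsD2[OF nl])
    then show ?thesis using nl by (simp add: null_setsD1)
  qed
  have "emeasure (PiM (insert i J) (\<lambda>_. lborel)) Z = (\<integral>\<^sup>+ a. indicator Z a \<partial>PiM (insert i J) (\<lambda>_. lborel))"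
    using Zs by simp
  also have "\<dots> = (\<integral>\<^sup>+ x. (\<integral>\<^sup>+ y. indicator Z (x(i := y)) \<partial>lborel) \<partial>PiM J (\<lambda>_. lborel))"
    by (rule pl.product_nn_integral_insert) (use insert Zs in auto)
  also have "\<dots> = 0"
  proof (rule nn_integral_0_iff_AE[THEN iffD2])
    show "(\<lambda>x. \<integral>\<^sup>+ y. indicator Z (x(i := y)) \<partial>lborel) \<in> borel_measurable (PiM J (\<lambda>_. lborel))"
      using Zs insert by measurable
    show "AE x in PiM J (\<lambda>_. lborel). (\<integral>\<^sup>+ y. indicator Z (x(i := y)) \<partial>lborel) = 0"
      by (rule AE_I'[OF Nk]) (use sec in auto)
  qed
  finally show ?case using Zs unfolding Z_def by (simp add: null_sets_def)
qed

definition pfm :: "'i set \<Rightarrow> nat \<Rightarrow> nat \<Rightarrow> (('i\<Rightarrow>complex) \<Rightarrow> complex mat) \<Rightarrow> bool" where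
  "pfm I n m F \<longleftrightarrow> (\<forall>a. F a \<in> carrier_mat n m) \<and> (\<forall>i<n. \<forall>j<m. (\<lambda>a. F a $$ (i,j)) \<in> pf I)"

lemma pfm_det:
  assumes "pfm I n n F"
  shows "(\<lambda>a. det (F a)) \<in> pf I"
proof -
  have c: "F a \<in> carrier_mat n n" for a using assms unfolding pfm_def by auto
  have e: "(\<lambda>i a. F a $$ (i, j)) i \<in> pf I" if "i < n" "j < n" for i j
    using assms that unfolding pfm_def by auto
  have "(\<lambda>a. \<Sum> p \<in> {p. p permutes {0 ..< n}}. signof p * (\<Prod> i = 0 ..< n. F a $$ (i, p i))) \<in> pf I"
  proof (rule pf_sum)
    show "finite {p. p permutes {0 ..< n}}" by (rule finite_permutations) simp
    fix p assume p: "p \<in> {p. p permutes {0 ..< n}}"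
    have "(\<lambda>a. \<Prod> i = 0 ..< n. F a $$ (i, p i)) \<in> pf I"
    proof (rule pf_prod)
      fix i assume i: "i \<in> {0..<n}"
      then have "p i < n" using p by (auto simp: permutes_in_image)
      then show "(\<lambda>a. F a $$ (i, p i)) \<in> pf I" using e[of i "p i"] i by auto
    qed simp
    then show "(\<lambda>a. signof p * (\<Prod> i = 0 ..< n. F a $$ (i, p i))) \<in> pf I"
      by (intro pf_mult pf_const)
  qed
  moreover have "det (F a) = (\<Sum> p \<in> {p. p permutes {0 ..< n}}. signof p * (\<Prod> i = 0 ..< n. F a $$ (i, p i)))" for a
    by (rule det_def'[OF c])
  ultimately show ?thesis by simp
qed

lemma pfm_delete:
  assumes "pfm I n n F" "k < n" "l < n"
  shows "pfm I (n-1) (n-1) (\<lambda>a. mat_delete (F a) k l)"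
proof -
  have c: "F a \<in> carrier_mat n n" for a using assms unfolding pfm_def by auto
  show ?thesis unfolding pfm_def
  proof (intro conjI allI impI)
    show "mat_delete (F a) k l \<in> carrier_mat (n - 1) (n - 1)" for a using c[of a] by auto
    fix i j assume ij: "i < n - 1" "j < n - 1"
    have "(\<lambda>a. F a $$ (if i < k then i else Suc i, if j < l then j else Suc j)) \<in> pf I"
      using assms(1) ij unfolding pfm_def by auto
    moreover have "dim_row (F a) = n" "dim_col (F a) = n" for a using c[of a] by auto
    ultimately show "(\<lambda>a. mat_delete (F a) k l $$ (i, j)) \<in> pf I"
      using ij unfolding mat_delete_def by simp
  qed
qed

lemma pfm_adj:
  assumes "pfm I n n F"
  shows "pfm I n n (\<lambda>a. adj_mat (F a))"
proof -
  have c: "F a \<in> carrier_mat n n" for a using assms unfolding pfm_def by auto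
  show ?thesis unfolding pfm_def
  proof (intro conjI allI impI)
    show "adj_mat (F a) \<in> carrier_mat n n" for a using adj_mat(1)[OF c[of a]] .
    fix i j assume ij: "i < n" "j < n"
    have "(\<lambda>a. (-1)^(j+i) * det (mat_delete (F a) j i)) \<in> pf I"
      by (intro pf_mult pf_const pfm_det[OF pfm_delete[OF assms ij(2) ij(1)]])
    moreover have "dim_row (F a) = n" "dim_col (F a) = n" for a using c[of a] by auto
    ultimately show "(\<lambda>a. adj_mat (F a) $$ (i, j)) \<in> pf I"
      using ij unfolding adj_mat_def cofactor_def by simp
  qed
qed

context vec_space begin

lemma rank_le_via_mult:
  assumes A: "A \<in> carrier_mat n na" and B: "B \<in> carrier_mat n nb"
    and c: "\<And>j. j < nb \<Longrightarrow> \<exists>y \<in> carrier_vec na. col B j = A *\<^sub>v y"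
  shows "rank B \<le> rank A"
proof -
  define W1 where "W1 = span (set (cols A))"
  have sub: "set (cols B) \<subseteq> W1"
  proof
    fix v assume "v \<in> set (cols B)"
    then obtain j where j: "j < nb" "v = col B j" using B by (auto simp: in_set_conv_nth)
    from c[OF j(1)] obtain y where y: "y \<in> carrier_vec na" "col B j = A *\<^sub>v y" by blast
    have "A *\<^sub>v y \<in> col_space A" using col_space_eq[OF A] y A by auto
    then show "v \<in> W1" using j y unfolding col_space_def W1_def by simp
  qed
  have sW1: "subspace class_ring W1 V"
    unfolding W1_def using span_is_subspace A cols_dim carrier_matD by auto
  have finW1: "vectorspace.fin_dim class_ring (vs W1)"
    unfolding W1_def using A fin_dim_span_cols by auto
  have "span (set (cols B)) \<subseteq> W1"
    using sub sW1 by (simp add: span_is_subset subspace_def)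
  moreover have sB: "subspace class_ring (span (set (cols B))) V"
    using span_is_subspace B cols_dim carrier_matD by auto
  ultimately have subspace: "subspace class_ring (span (set (cols B))) (vs W1)"
    using nested_subspaces[OF sW1 sB] by auto
  have "vectorspace.fin_dim class_ring (span_vs (set (cols B)))" using B fin_dim_span_cols by blast
  then have "rank B \<le> vectorspace.dim class_ring (vs W1)" unfolding rank_def
    using vectorspace.subspace_dim[OF subspace_is_vs[OF sW1] subspace finW1] by auto
  then show ?thesis unfolding rank_def W1_def .
qed

lemma rank_le_n:
  assumes B: "B \<in> carrier_mat n nb"
  shows "rank B \<le> n"
proof -
  have "rank B \<le> rank (1\<^sub>m n)"
    by (rule rank_le_via_mult[OF one_carrier_mat B]) (use B in auto)
  also have "\<dots> \<le> n" by (rule rank_le_nc[OF one_carrier_mat])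
  finally show ?thesis .
qed

end

lemma pick_image:
  assumes fin: "finite I" and sm: "strict_mono_on I \<sigma>" and m: "m < card I"
  shows "pick (\<sigma> ` I) m = \<sigma> (pick I m)"
proof -
  define x where "x = pick I m"
  have xI: "x \<in> I" unfolding x_def using pick_in_set_le[OF m] .
  have cx: "card {a\<in>I. a < x} = m" unfolding x_def using card_pick_le[OF m] .
  have inj: "inj_on \<sigma> I" using sm by (rule strict_mono_on_imp_inj_on)
  have lt: "\<sigma> a < \<sigma> b \<longleftrightarrow> a < b" if "a \<in> I" "b \<in> I" for a b
    using sm that by (metis not_less_iff_gr_or_eq order_less_asym strict_mono_onD)
  have "{a \<in> \<sigma> ` I. a < \<sigma> x} = \<sigma> ` {a\<in>I. a < x}"
    using lt xI by auto
  then have "card {a \<in> \<sigma> ` I. a < \<sigma> x} = m"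
    using cx inj by (simp add: card_image inj_on_subset[of \<sigma> I])
  then show ?thesis
    using pick_card_in_set[of "\<sigma> x" "\<sigma> ` I"] xI unfolding x_def by auto
qed

locale setting =
  fixes K N M :: nat
  assumes K2: "K \<ge> 2" and M0: "0 < M" and MN: "M \<le> N" and KMN: "N < K * M"
begin

definition r where "r = K * M - N"
definition Iset :: "(nat \<times> nat \<times> nat) set" where "Iset = {..<K} \<times> {..<N} \<times> {..<M}"

abbreviation A where "A a \<equiv> Amat K N M a"

definition AJ :: "(nat \<times> nat \<times> nat \<Rightarrow> complex) \<Rightarrow> complex mat" where
  "AJ a = mat N N (\<lambda>(i,j). A a $$ (i,j))"

definition nv :: "(nat \<times> nat \<times> nat \<Rightarrow> complex) \<Rightarrow> nat \<Rightarrow> complex vec" where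
  "nv a t = vec (K*M) (\<lambda>c. if c < N then - ((adj_mat (AJ a) *\<^sub>v col (A a) (N + t)) $ c)
      else if c = N + t then det (AJ a) else 0)"

lemma smult_one_idx: "i < n \<Longrightarrow> w \<in> carrier_vec n \<Longrightarrow> ((c \<cdot>\<^sub>m 1\<^sub>m n) *\<^sub>v w) $ i = c * w $ i" for c :: complex
proof -
  assume i: "i < n" and w: "w \<in> carrier_vec n"
  have "((c \<cdot>\<^sub>m 1\<^sub>m n) *\<^sub>v w) $ i = (\<Sum>j\<in>{0..<n}. c * (if j = i then 1 else 0) * w $ j)"
    using i w by (auto simp: scalar_prod_def)
  also have "\<dots> = (\<Sum>j\<in>{0..<n}. (if i = j then c * w $ j else 0))"
    by (rule sum.cong) auto
  also have "\<dots> = c * w $ i" using i by simp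
  finally show ?thesis .
qed

lemma r_pos: "0 < r" using KMN unfolding r_def by auto
lemma Nr: "N + r = K * M" using KMN unfolding r_def by auto

lemma A_carrier: "A a \<in> carrier_mat N (K*M)" unfolding Amat_def by auto

lemma A_index: "i < N \<Longrightarrow> j < K * M \<Longrightarrow> A a $$ (i,j) = a (j div M, i, j mod M)"
  unfolding Amat_def Ablock_def using M0 by auto

lemma AJ_carrier: "AJ a \<in> carrier_mat N N" unfolding AJ_def by auto

lemma nv_dim: "dim_vec (nv a t) = K*M" unfolding nv_def by (simp only: dim_vec)

lemma nv_index: "c < K*M \<Longrightarrow> nv a t $ c = (if c < N then - ((adj_mat (AJ a) *\<^sub>v col (A a) (N + t)) $ c)
      else if c = N + t then det (AJ a) else 0)"
  unfolding nv_def by (rule index_vec)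

lemma nv_kernel:
  assumes t: "t < r"
  shows "A a *\<^sub>v nv a t = 0\<^sub>v N"
proof (rule eq_vecI)
  show "dim_vec (A a *\<^sub>v nv a t) = dim_vec (0\<^sub>v N)" using A_carrier[of a] by simp
  fix i assume "i < dim_vec (0\<^sub>v N)"
  then have i: "i < N" by simp
  let ?f = "N + t"
  have f: "?f < K * M" using t Nr by auto
  let ?w = "col (A a) ?f"
  have w: "?w \<in> carrier_vec N" by (rule col_carrier_vec[OF f A_carrier])
  have adjc: "adj_mat (AJ a) \<in> carrier_mat N N" using adj_mat(1)[OF AJ_carrier] .
  have s0: "(A a *\<^sub>v nv a t) $ i = (\<Sum>c\<in>{0..<K*M}. A a $$ (i,c) * nv a t $ c)"
    using i A_carrier[of a] unfolding index_mult_mat_vec[of i] by (simp add: scalar_prod_def nv_dim)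
  have s1: "(\<Sum>c\<in>{0..<K*M}. A a $$ (i,c) * nv a t $ c) = (\<Sum>c\<in>{0..<N}. A a $$ (i,c) * nv a t $ c) + (\<Sum>c\<in>{N..<K*M}. A a $$ (i,c) * nv a t $ c)"
    using KMN by (intro sum.atLeastLessThan_concat[symmetric]) auto
  have s2: "(\<Sum>c\<in>{N..<K*M}. A a $$ (i,c) * nv a t $ c) = (\<Sum>c\<in>{N..<K*M}. if c = ?f then A a $$ (i,?f) * det (AJ a) else 0)"
    by (rule sum.cong) (auto simp: nv_index)
  have s3: "(\<Sum>c\<in>{N..<K*M}. if c = ?f then A a $$ (i,?f) * det (AJ a) else 0) = A a $$ (i,?f) * det (AJ a)"
    using f by simp
  have s4: "(\<Sum>c\<in>{0..<N}. A a $$ (i,c) * nv a t $ c) = (\<Sum>c\<in>{0..<N}. - (AJ a $$ (i,c) * (adj_mat (AJ a) *\<^sub>v ?w) $ c))"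
    by (rule sum.cong) (use KMN i in \<open>auto simp: nv_index AJ_def\<close>)
  have s5: "(\<Sum>c\<in>{0..<N}. - (AJ a $$ (i,c) * (adj_mat (AJ a) *\<^sub>v ?w) $ c)) = - (\<Sum>c\<in>{0..<N}. AJ a $$ (i,c) * (adj_mat (AJ a) *\<^sub>v ?w) $ c)"
    by (rule sum_negf)
  have s6: "(\<Sum>c\<in>{0..<N}. AJ a $$ (i,c) * (adj_mat (AJ a) *\<^sub>v ?w) $ c) = (AJ a *\<^sub>v (adj_mat (AJ a) *\<^sub>v ?w)) $ i"
    using i adjc AJ_carrier[of a] by (simp add: scalar_prod_def)
  have s7: "(AJ a *\<^sub>v (adj_mat (AJ a) *\<^sub>v ?w)) = ((AJ a * adj_mat (AJ a)) *\<^sub>v ?w)"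
    using adjc AJ_carrier[of a] w by simp
  have s8: "((AJ a * adj_mat (AJ a)) *\<^sub>v ?w) $ i = det (AJ a) * ?w $ i"
    unfolding adj_mat(2)[OF AJ_carrier] using i w by (rule smult_one_idx)
  have s9: "?w $ i = A a $$ (i, ?f)" using i f A_carrier[of a] by simp
  show "(A a *\<^sub>v nv a t) $ i = 0\<^sub>v N $ i"
    unfolding s0 s1 s2 s3 s4 s5 s6 s7 s8 s9 using i by simp
qed

definition W :: "(nat \<times> nat \<times> nat \<Rightarrow> complex) \<Rightarrow> complex mat" where
  "W a = mat N (K*r) (\<lambda>(i,j). \<Sum>c<M. A a $$ (i, (j div r)*M + c) * nv a (j mod r) $ ((j div r)*M + c))"

lemma W_carrier: "W a \<in> carrier_mat N (K*r)" unfolding W_def by simp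

lemma W_index: "i < N \<Longrightarrow> j < K*r \<Longrightarrow>
  W a $$ (i,j) = (\<Sum>c<M. A a $$ (i, (j div r)*M + c) * nv a (j mod r) $ ((j div r)*M + c))"
  unfolding W_def by simp

lemma blk_lt: "k < K \<Longrightarrow> c < M \<Longrightarrow> k*M + c < K*M"
proof -
  assume "k < K" "c < M"
  then have "k*M + c < k*M + M" by simp
  also have "\<dots> = (k+1)*M" by simp
  also have "\<dots> \<le> K*M" using \<open>k < K\<close> by (intro mult_right_mono) auto
  finally show ?thesis .
qed

lemma A_pf: "i < N \<Longrightarrow> j < K*M \<Longrightarrow> (\<lambda>a. A a $$ (i,j)) \<in> pf Iset"
proof -
  assume ij: "i < N" "j < K*M"
  have "(j div M, i, j mod M) \<in> Iset" unfolding Iset_def using ij M0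
    by (auto simp: div_less_iff_less_mult mult.commute)
  then have "(\<lambda>a. a (j div M, i, j mod M)) \<in> pf Iset" by (rule pf_proj)
  moreover have "A a $$ (i,j) = a (j div M, i, j mod M)" for a using A_index ij by blast
  ultimately show ?thesis by simp
qed

lemma AJ_pfm: "pfm Iset N N AJ"
  unfolding pfm_def
proof (intro conjI allI impI)
  show "AJ a \<in> carrier_mat N N" for a by (rule AJ_carrier)
  fix i j assume ij: "i < N" "j < N"
  have "(\<lambda>a. A a $$ (i,j)) \<in> pf Iset" using ij KMN by (intro A_pf) auto
  moreover have "AJ a $$ (i,j) = A a $$ (i,j)" for a unfolding AJ_def using ij by simp
  ultimately show "(\<lambda>a. AJ a $$ (i, j)) \<in> pf Iset" by simp
qed

lemma nv_pf: "c < K*M \<Longrightarrow> t < r \<Longrightarrow> (\<lambda>a. nv a t $ c) \<in> pf Iset"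
proof -
  assume c: "c < K*M" and t: "t < r"
  have f: "N + t < K*M" using t Nr by auto
  have adjp: "pfm Iset N N (\<lambda>a. adj_mat (AJ a))" by (rule pfm_adj[OF AJ_pfm])
  show ?thesis
  proof (cases "c < N")
    case True
    have e: "nv a t $ c = - (\<Sum>l\<in>{0..<N}. adj_mat (AJ a) $$ (c,l) * A a $$ (l, N+t))" for a
    proof -
      have ac: "adj_mat (AJ a) \<in> carrier_mat N N" by (rule adj_mat(1)[OF AJ_carrier])
      have e1: "nv a t $ c = - ((adj_mat (AJ a) *\<^sub>v col (A a) (N + t)) $ c)"
        unfolding nv_index[OF c] using True by (simp only: if_True)
      have e2: "(adj_mat (AJ a) *\<^sub>v col (A a) (N + t)) $ c = (\<Sum>l\<in>{0..<N}. adj_mat (AJ a) $$ (c,l) * A a $$ (l, N+t))"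
      proof -
        have cc: "c < dim_row (adj_mat (AJ a))" using ac True by simp
        show ?thesis
        unfolding index_mult_mat_vec[OF cc]
        unfolding scalar_prod_def
      proof (rule sum.cong)
        have dA: "dim_row (A a) = N" "dim_col (A a) = K*M" using A_carrier[of a] by (simp_all only: carrier_matD)
        have da: "dim_row (adj_mat (AJ a)) = N" "dim_col (adj_mat (AJ a)) = N" using ac by (simp_all only: carrier_matD)
        show "{0..<dim_vec (col (A a) (N + t))} = {0..<N}" using dA by simp
        fix l assume "l \<in> {0..<N}"
        then show "row (adj_mat (AJ a)) c $ l * col (A a) (N + t) $ l = adj_mat (AJ a) $$ (c, l) * A a $$ (l, N + t)"
          using dA da f True by simp
      qed
      qed
      show ?thesis unfolding e1 e2 ..
    qed
    have "(\<lambda>a. - (\<Sum>l\<in>{0..<N}. adj_mat (AJ a) $$ (c,l) * A a $$ (l, N+t))) \<in> pf Iset"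
    proof (intro pf_uminus pf_sum pf_mult)
      fix l assume l: "l \<in> {0..<N}"
      show "(\<lambda>a. adj_mat (AJ a) $$ (c, l)) \<in> pf Iset" using adjp True l unfolding pfm_def by auto
      show "(\<lambda>a. A a $$ (l, N + t)) \<in> pf Iset" using l f by (intro A_pf) auto
    qed simp
    then show ?thesis unfolding e .
  next
    case False
    show ?thesis
    proof (cases "c = N + t")
      case True
      have "(\<lambda>a. nv a t $ c) = (\<lambda>a. det (AJ a))"
        by (rule ext) (unfold nv_index[OF c] if_not_P[OF False] if_P[OF True], rule refl)
      show ?thesis unfolding \<open>(\<lambda>a. nv a t $ c) = (\<lambda>a. det (AJ a))\<close> by (rule pfm_det[OF AJ_pfm])
    next
      case F2: False
      have "(\<lambda>a. nv a t $ c) = (\<lambda>a. 0)"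
        by (rule ext) (unfold nv_index[OF c] if_not_P[OF False] if_not_P[OF F2], rule refl)
      show ?thesis unfolding \<open>(\<lambda>a. nv a t $ c) = (\<lambda>a. 0)\<close> by (rule pf_const)
    qed
  qed
qed

lemma W_pf: "i < N \<Longrightarrow> j < K*r \<Longrightarrow> (\<lambda>a. W a $$ (i,j)) \<in> pf Iset"
proof -
  assume ij: "i < N" "j < K*r"
  have k: "j div r < K" using ij r_pos by (auto simp: div_less_iff_less_mult mult.commute)
  have t: "j mod r < r" using r_pos by simp
  have "(\<lambda>a. \<Sum>c<M. A a $$ (i, (j div r)*M + c) * nv a (j mod r) $ ((j div r)*M + c)) \<in> pf Iset"
  proof (intro pf_sum pf_mult)
    fix c assume "c \<in> {..<M}"
    then have c: "(j div r)*M + c < K*M" using blk_lt[OF k] by auto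
    show "(\<lambda>a. A a $$ (i, (j div r)*M + c)) \<in> pf Iset" using A_pf ij c by blast
    show "(\<lambda>a. nv a (j mod r) $ ((j div r)*M + c)) \<in> pf Iset" using nv_pf c t by blast
  qed simp
  then show ?thesis using W_index[OF ij] by simp
qed

lemma sub_pfm: "pfm Iset (card {i. i<N \<and> i\<in>I}) (card {j. j<K*r \<and> j\<in>J}) (\<lambda>a. submatrix (W a) I J)"
  unfolding pfm_def
proof (intro conjI allI impI)
  show "submatrix (W a) I J \<in> carrier_mat (card {i. i<N \<and> i\<in>I}) (card {j. j<K*r \<and> j\<in>J})" for a
    by (rule carrier_matI) (simp_all only: dim_submatrix carrier_matD[OF W_carrier])
  fix i j assume i: "i < card {i. i<N \<and> i\<in>I}" and j: "j < card {j. j<K*r \<and> j\<in>J}"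
  have pi: "pick I i < N" using pick_le i by (simp add: conj_commute)
  have pj: "pick J j < K*r" using pick_le j by (simp add: conj_commute)
  have "submatrix (W a) I J $$ (i,j) = W a $$ (pick I i, pick J j)" for a
    by (rule submatrix_index) (simp_all only: carrier_matD[OF W_carrier] i j)
  then show "(\<lambda>a. submatrix (W a) I J $$ (i, j)) \<in> pf Iset" using W_pf[OF pi pj] by simp
qed

end

lemma sum_blocks: "(\<Sum>j<K'*r'. f j) = (\<Sum>k<K'. \<Sum>s<r'. f (k*r'+s))" for f :: "nat \<Rightarrow> 'a::comm_monoid_add" and K' r' :: nat
proof -
  have e: "sum f {k*r'..<k*r'+r'} = (\<Sum>s<r'. f (k*r'+s))" for k
    using sum.shift_bounds_nat_ivl[of f 0 "k*r'" r'] by (simp add: add.commute atLeast0LessThan)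
  have "(\<Sum>j<K'*r'. f j) = (\<Sum>k<K'. sum f {k*r'..<k*r'+r'})"
    using sum.nat_group[where g=f and k=r' and n=K'] by simp
  then show ?thesis by (simp only: e)
qed

context setting begin

lemma kr_div: "t < r \<Longrightarrow> (k*r+t) div r = k" using r_pos by simp
lemma kr_mod: "t < r \<Longrightarrow> (k*r+t) mod r = t" using r_pos by simp
lemma kr_lt: "k < K \<Longrightarrow> t < r \<Longrightarrow> k*r+t < K*r"
proof -
  assume "k < K" "t < r"
  then have "k*r + t < k*r + r" by simp
  also have "\<dots> = (k+1)*r" by simp
  also have "\<dots> \<le> K*r" using \<open>k < K\<close> by (intro mult_right_mono) auto
  finally show ?thesis .
qed

lemma Ablock_index: "i < N \<Longrightarrow> c < M \<Longrightarrow> Ablock N M a k $$ (i,c) = a (k,i,c)"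
  unfolding Ablock_def by simp

lemma A_index2: "i < N \<Longrightarrow> k < K \<Longrightarrow> c < M \<Longrightarrow> A a $$ (i, k*M+c) = a (k,i,c)"
proof -
  assume h: "i < N" "k < K" "c < M"
  have "A a $$ (i, k*M+c) = a ((k*M+c) div M, i, (k*M+c) mod M)" using A_index h blk_lt by blast
  then show ?thesis using h M0 by simp
qed

lemma At_index:
  assumes U: "U \<in> carrier_mat (K*M) r" and i: "i < N" and k: "k < K" and t: "t < r"
  shows "Atilde K N M a U $$ (i, k*r+t) = (\<Sum>c<M. A a $$ (i, k*M+c) * U $$ (k*M+c, t))"
proof -
  have dU: "dim_col U = r" "dim_row U = K*M" using U by (simp_all only: carrier_matD)
  have "Atilde K N M a U $$ (i, k*r+t) = (Ablock N M a k * Ublock M U k) $$ (i, t)"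
    unfolding Atilde_def Let_def r_def[symmetric] using kr_lt[OF k t] i kr_div[OF t] kr_mod[OF t] by simp
  also have "\<dots> = (\<Sum>c\<in>{0..<M}. Ablock N M a k $$ (i,c) * Ublock M U k $$ (c,t))"
    using i t dU unfolding Ablock_def Ublock_def by (simp add: scalar_prod_def)
  also have "\<dots> = (\<Sum>c<M. A a $$ (i, k*M+c) * U $$ (k*M+c, t))"
    using i t dU k by (intro sum.cong) (auto simp: Ablock_index A_index2 Ublock_def)
  finally show ?thesis .
qed

lemma At_carrier: "Atilde K N M a U \<in> carrier_mat N (K*r)"
  unfolding Atilde_def Let_def r_def[symmetric] by simp

lemma nb_carrier: "null_basis_mat (A a) U r \<Longrightarrow> U \<in> carrier_mat (K*M) r"
  unfolding null_basis_mat_def using carrier_matD(2)[OF A_carrier] by simp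

lemma nb_span:
  assumes nb: "null_basis_mat (A a) U r" and v: "v \<in> mat_kernel (A a)"
  shows "\<exists>x\<in>carrier_vec r. U *\<^sub>v x = v"
proof -
  interpret V: vec_space "TYPE(complex)" "K*M" .
  have Uc: "U \<in> carrier_mat (K*M) r" by (rule nb_carrier[OF nb])
  have sp: "V.span (set (cols U)) = mat_kernel (A a)"
    using nb unfolding null_basis_mat_def using carrier_matD(2)[OF A_carrier] by simp
  have "v \<in> V.col_space U" unfolding V.col_space_def sp using v .
  then show ?thesis unfolding V.col_space_eq[OF Uc] using Uc by auto
qed

lemma nb_cols:
  assumes nb: "null_basis_mat (A a) U r" and t: "t < r"
  shows "A a *\<^sub>v col U t = 0\<^sub>v N"
proof -
  interpret V: vec_space "TYPE(complex)" "K*M" .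
  have Uc: "U \<in> carrier_mat (K*M) r" by (rule nb_carrier[OF nb])
  have sp: "V.span (set (cols U)) = mat_kernel (A a)"
    using nb unfolding null_basis_mat_def using carrier_matD(2)[OF A_carrier] by simp
  have sub: "set (cols U) \<subseteq> carrier_vec (K*M)" using Uc by (auto simp: cols_def)
  have "col U t \<in> set (cols U)" using Uc t by (auto simp: cols_def)
  then have "col U t \<in> V.span (set (cols U))" using V.in_own_span sub by blast
  then have "col U t \<in> mat_kernel (A a)" using sp by simp
  then show ?thesis unfolding mat_kernel_def using carrier_matD(1)[OF A_carrier] by simp
qed

lemma nv_carrier: "nv a t \<in> carrier_vec (K*M)"
  unfolding carrier_vec_def using nv_dim by simp

lemma W_col_in:
  assumes nb: "null_basis_mat (A a) U r" and j: "j < K*r"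
  shows "\<exists>y\<in>carrier_vec (K*r). col (W a) j = Atilde K N M a U *\<^sub>v y"
proof -
  define k where "k = j div r"
  define t where "t = j mod r"
  have k: "k < K" unfolding k_def using j r_pos by (auto simp: div_less_iff_less_mult mult.commute)
  have t: "t < r" unfolding t_def using r_pos by simp
  have jkt: "j = k*r + t" unfolding k_def t_def by simp
  have Uc: "U \<in> carrier_mat (K*M) r" by (rule nb_carrier[OF nb])
  have "nv a t \<in> mat_kernel (A a)"
    unfolding mat_kernel_def using nv_kernel[OF t] nv_carrier carrier_matD[OF A_carrier] by simp
  then obtain x where x: "x \<in> carrier_vec r" "U *\<^sub>v x = nv a t" using nb_span[OF nb] by blast
  define y where "y = vec (K*r) (\<lambda>j'. if j' div r = k then x $ (j' mod r) else 0)"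
  have yc: "y \<in> carrier_vec (K*r)" unfolding y_def by simp
  have Atc: "Atilde K N M a U \<in> carrier_mat N (K*r)" by (rule At_carrier)
  have "col (W a) j = Atilde K N M a U *\<^sub>v y"
  proof (rule eq_vecI)
    show "dim_vec (col (W a) j) = dim_vec (Atilde K N M a U *\<^sub>v y)"
      using carrier_matD[OF W_carrier] carrier_matD[OF Atc] by simp
    fix i assume "i < dim_vec (Atilde K N M a U *\<^sub>v y)"
    then have i: "i < N" using carrier_matD[OF Atc] by simp
    have "(Atilde K N M a U *\<^sub>v y) $ i = (\<Sum>j'\<in>{0..<K*r}. Atilde K N M a U $$ (i,j') * y $ j')"
      using i carrier_matD[OF Atc] yc by (simp add: scalar_prod_def)
    also have "\<dots> = (\<Sum>j'<K*r. Atilde K N M a U $$ (i,j') * y $ j')" by (simp add: atLeast0LessThan)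
    also have "\<dots> = (\<Sum>k'<K. \<Sum>s<r. Atilde K N M a U $$ (i,k'*r+s) * y $ (k'*r+s))" by (rule sum_blocks)
    also have "\<dots> = (\<Sum>k'<K. \<Sum>s<r. if k' = k then Atilde K N M a U $$ (i,k*r+s) * x $ s else 0)"
      using kr_lt unfolding y_def by (intro sum.cong refl) (auto simp: kr_div kr_mod)
    also have "\<dots> = (\<Sum>s<r. Atilde K N M a U $$ (i,k*r+s) * x $ s)"
    proof -
      have "(\<Sum>k'<K. \<Sum>s<r. if k' = k then Atilde K N M a U $$ (i,k*r+s) * x $ s else 0)
          = (\<Sum>k'<K. if k' = k then (\<Sum>s<r. Atilde K N M a U $$ (i,k*r+s) * x $ s) else 0)"
        by (intro sum.cong refl) simp
      also have "\<dots> = (\<Sum>s<r. Atilde K N M a U $$ (i,k*r+s) * x $ s)"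
        using k by (simp add: sum.delta')
      finally show ?thesis .
    qed
    also have "\<dots> = (\<Sum>s<r. \<Sum>c<M. A a $$ (i, k*M+c) * U $$ (k*M+c, s) * x $ s)"
      using At_index[OF Uc i k] by (simp add: sum_distrib_right)
    also have "\<dots> = (\<Sum>c<M. A a $$ (i, k*M+c) * (\<Sum>s<r. U $$ (k*M+c, s) * x $ s))"
      by (subst sum.swap) (simp add: sum_distrib_left mult.assoc)
    also have "\<dots> = (\<Sum>c<M. A a $$ (i, k*M+c) * nv a t $ (k*M+c))"
    proof (intro sum.cong refl)
      fix c assume "c \<in> {..<M}"
      then have c: "k*M+c < K*M" using blk_lt[OF k] by simp
      have "nv a t $ (k*M+c) = (U *\<^sub>v x) $ (k*M+c)" using x by simp
      also have "\<dots> = (\<Sum>s\<in>{0..<r}. U $$ (k*M+c, s) * x $ s)"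
        using c Uc x(1) by (simp add: scalar_prod_def carrier_matD)
      finally show "A a $$ (i, k*M+c) * (\<Sum>s<r. U $$ (k*M+c, s) * x $ s) = A a $$ (i, k*M+c) * nv a t $ (k*M+c)"
        by (simp add: atLeast0LessThan)
    qed
    also have "\<dots> = W a $$ (i, j)" using W_index[OF i j] unfolding k_def t_def by simp
    also have "\<dots> = col (W a) j $ i" using i j carrier_matD[OF W_carrier] by simp
    finally show "col (W a) j $ i = (Atilde K N M a U *\<^sub>v y) $ i" by simp
  qed
  then show ?thesis using yc by blast
qed

lemma rank_W_le:
  assumes nb: "null_basis_mat (A a) U r"
  shows "vec_space.rank N (W a) \<le> vec_space.rank N (Atilde K N M a U)"
proof -
  interpret V: vec_space "TYPE(complex)" N .
  show ?thesis by (rule V.rank_le_via_mult[OF At_carrier W_carrier W_col_in[OF nb]])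
qed

end

lemma lt_blk: "k < K' \<Longrightarrow> s < r' \<Longrightarrow> k*r'+s < K'*(r'::nat)"
proof -
  assume "k < K'" "s < r'"
  then have "k*r' + s < k*r' + r'" by simp
  also have "\<dots> = (k+1)*r'" by simp
  also have "\<dots> \<le> K'*r'" using \<open>k < K'\<close> by (intro mult_right_mono) auto
  finally show ?thesis .
qed

context setting begin

lemma At_sum0:
  assumes nb: "null_basis_mat (A a) U r" and i: "i < N" and t: "t < r"
  shows "(\<Sum>k<K. Atilde K N M a U $$ (i, k*r+t)) = 0"
proof -
  have Uc: "U \<in> carrier_mat (K*M) r" by (rule nb_carrier[OF nb])
  have "(\<Sum>k<K. Atilde K N M a U $$ (i, k*r+t)) = (\<Sum>k<K. \<Sum>c<M. A a $$ (i, k*M+c) * U $$ (k*M+c, t))"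
    using At_index[OF Uc i _ t] by simp
  also have "\<dots> = (\<Sum>c'<K*M. A a $$ (i, c') * U $$ (c', t))"
    by (rule sum_blocks[symmetric])
  also have "\<dots> = (A a *\<^sub>v col U t) $ i"
    using i t Uc carrier_matD[OF A_carrier] by (simp add: scalar_prod_def atLeast0LessThan carrier_matD)
  also have "\<dots> = 0" using nb_cols[OF nb t] i by simp
  finally show ?thesis .
qed

lemma rank_At_le1:
  assumes nb: "null_basis_mat (A a) U r"
  shows "vec_space.rank N (Atilde K N M a U) \<le> (K - 1) * r"
proof -
  interpret V: vec_space "TYPE(complex)" N .
  let ?T = "Atilde K N M a U"
  define B where "B = mat N ((K-1)*r) (\<lambda>(i,j). ?T $$ (i,j))"
  have Bc: "B \<in> carrier_mat N ((K-1)*r)" unfolding B_def by simp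
  have Tc: "?T \<in> carrier_mat N (K*r)" by (rule At_carrier)
  have K1: "K = Suc (K - 1)" using K2 by simp
  have "V.rank ?T \<le> V.rank B"
  proof (rule V.rank_le_via_mult[OF Bc Tc])
    fix j assume j: "j < K*r"
    show "\<exists>y\<in>carrier_vec ((K - 1) * r). col ?T j = B *\<^sub>v y"
    proof (cases "j < (K-1)*r")
      case True
      define y where "y = vec ((K-1)*r) (\<lambda>j'. if j' = j then (1::complex) else 0)"
      have "col ?T j = B *\<^sub>v y"
      proof (rule eq_vecI)
        show "dim_vec (col ?T j) = dim_vec (B *\<^sub>v y)" using carrier_matD[OF Tc] carrier_matD[OF Bc] by simp
        fix i assume "i < dim_vec (B *\<^sub>v y)"
        then have i: "i < N" using carrier_matD[OF Bc] by simp
        have "(B *\<^sub>v y) $ i = (\<Sum>j'\<in>{0..<(K-1)*r}. B $$ (i,j') * y $ j')"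
          using i Bc unfolding y_def by (simp add: scalar_prod_def carrier_matD)
        also have "\<dots> = (\<Sum>j'\<in>{0..<(K-1)*r}. if j' = j then ?T $$ (i,j) else 0)"
          unfolding y_def B_def using i by (intro sum.cong refl) auto
        also have "\<dots> = ?T $$ (i,j)" using True by (simp add: sum.delta')
        also have "\<dots> = col ?T j $ i" using i j carrier_matD[OF Tc] by simp
        finally show "col ?T j $ i = (B *\<^sub>v y) $ i" by simp
      qed
      moreover have "y \<in> carrier_vec ((K-1)*r)" unfolding y_def by simp
      ultimately show ?thesis by blast
    next
      case False
      define t where "t = j - (K-1)*r"
      have Kr: "K*r = (K-1)*r + r"
      proof -
        have "K*r = Suc (K-1) * r" using K1 by simp
        then show ?thesis by simp
      qed
      have t: "t < r" using j False Kr unfolding t_def by linarith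
      have jt: "j = (K-1)*r + t" using False unfolding t_def by simp
      define y where "y = vec ((K-1)*r) (\<lambda>j'. if j' mod r = t then (-1::complex) else 0)"
      have "col ?T j = B *\<^sub>v y"
      proof (rule eq_vecI)
        show "dim_vec (col ?T j) = dim_vec (B *\<^sub>v y)" using carrier_matD[OF Tc] carrier_matD[OF Bc] by simp
        fix i assume "i < dim_vec (B *\<^sub>v y)"
        then have i: "i < N" using carrier_matD[OF Bc] by simp
        have "(B *\<^sub>v y) $ i = (\<Sum>j'\<in>{0..<(K-1)*r}. B $$ (i,j') * y $ j')"
          using i Bc unfolding y_def by (simp add: scalar_prod_def carrier_matD)
        also have "\<dots> = (\<Sum>j'<(K-1)*r. B $$ (i,j') * y $ j')" by (simp add: atLeast0LessThan)
        also have "\<dots> = (\<Sum>k<K-1. \<Sum>s<r. B $$ (i,k*r+s) * y $ (k*r+s))" by (rule sum_blocks)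
        also have "\<dots> = (\<Sum>k<K-1. \<Sum>s<r. if s = t then - ?T $$ (i,k*r+t) else 0)"
        proof (intro sum.cong refl)
          fix k s assume k: "k \<in> {..<K-1}" and s: "s \<in> {..<r}"
          have ks: "k*r+s < (K-1)*r" using lt_blk[of k "K-1" s r] k s by simp
          show "B $$ (i,k*r+s) * y $ (k*r+s) = (if s = t then - ?T $$ (i,k*r+t) else 0)"
            using ks i s unfolding B_def y_def by (auto simp: kr_mod)
        qed
        also have "\<dots> = - (\<Sum>k<K-1. ?T $$ (i,k*r+t))"
          using t by (simp add: sum.delta sum_negf)
        also have "\<dots> = ?T $$ (i,(K-1)*r+t)"
        proof -
          have "(\<Sum>k<K. ?T $$ (i,k*r+t)) = 0" by (rule At_sum0[OF nb i t])
          then have "(\<Sum>k<K-1. ?T $$ (i,k*r+t)) + ?T $$ (i,(K-1)*r+t) = 0"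
            using K1 sum.lessThan_Suc[of "\<lambda>k. ?T $$ (i,k*r+t)" "K-1"] by simp
          then have "?T $$ (i,(K-1)*r+t) + (\<Sum>k<K-1. ?T $$ (i,k*r+t)) = 0" by (simp add: add.commute)
          then have "?T $$ (i,(K-1)*r+t) = - (\<Sum>k<K-1. ?T $$ (i,k*r+t))" using eq_neg_iff_add_eq_0 by blast
          then show ?thesis by simp
        qed
        also have "\<dots> = col ?T j $ i" using i j jt carrier_matD[OF Tc] by simp
        finally show "col ?T j $ i = (B *\<^sub>v y) $ i" by simp
      qed
      moreover have "y \<in> carrier_vec ((K-1)*r)" unfolding y_def by simp
      ultimately show ?thesis by blast
    qed
  qed
  also have "\<dots> \<le> (K-1)*r" by (rule V.rank_le_nc[OF Bc])
  finally show ?thesis .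
qed

lemma rank_At_le:
  assumes nb: "null_basis_mat (A a) U r"
  shows "vec_space.rank N (Atilde K N M a U) \<le> min ((K - 1) * r) N"
proof -
  interpret V: vec_space "TYPE(complex)" N .
  show ?thesis using rank_At_le1[OF nb] V.rank_le_n[OF At_carrier] by simp
qed

end

context setting begin

definition q where "q = N div M"
definition s where "s = N mod M"
definition tau :: "nat \<Rightarrow> nat" where
  "tau i = (if i div M < q then i mod M else M - s + i mod M)"
definition a0 :: "nat \<times> nat \<times> nat \<Rightarrow> complex" where
  "a0 = (\<lambda>(k,i,j). if k*M + j < N then (if i = k*M + j then 1 else 0)
                    else (if tau i = k*M + j - N then 1 else 0))"

lemma A0_index: "i < N \<Longrightarrow> c < K*M \<Longrightarrow>
  A a0 $$ (i,c) = (if c < N then (if i = c then 1 else 0) else (if tau i = c - N then 1 else 0))"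
proof -
  assume i: "i < N" and c: "c < K*M"
  have "A a0 $$ (i,c) = a0 (c div M, i, c mod M)" using A_index[OF i c] .
  moreover have "c div M * M + c mod M = c" by simp
  ultimately show ?thesis unfolding a0_def by simp
qed

lemma AJ0: "AJ a0 = 1\<^sub>m N"
  by (rule eq_matI) (auto simp: AJ_def A0_index KMN less_trans[OF _ KMN])

lemma adj_one: "adj_mat (1\<^sub>m n) = (1\<^sub>m n :: complex mat)"
proof -
  have "1\<^sub>m n * adj_mat (1\<^sub>m n) = det (1\<^sub>m n :: complex mat) \<cdot>\<^sub>m 1\<^sub>m n" by (rule adj_mat(2)) simp
  moreover have "1\<^sub>m n * adj_mat (1\<^sub>m n) = adj_mat (1\<^sub>m n :: complex mat)"
    using adj_mat(1)[of "1\<^sub>m n :: complex mat" n] by simp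
  moreover have "(1::complex) \<cdot>\<^sub>m 1\<^sub>m n = 1\<^sub>m n" by (rule eq_matI) auto
  ultimately show ?thesis by simp
qed

lemma nv0_index: "c < K*M \<Longrightarrow> t < r \<Longrightarrow>
  nv a0 t $ c = (if c < N then (if tau c = t then -1 else 0) else if c = N + t then 1 else 0)"
proof -
  assume c: "c < K*M" and t: "t < r"
  have f: "N + t < K*M" using t Nr by simp
  show ?thesis
  proof (cases "c < N")
    case True
    have "nv a0 t $ c = - ((1\<^sub>m N *\<^sub>v col (A a0) (N + t)) $ c)"
      unfolding nv_index[OF c] AJ0 adj_one using True by simp
    also have "(1\<^sub>m N *\<^sub>v col (A a0) (N + t)) $ c = col (A a0) (N + t) $ c"
      using col_carrier_vec[OF f A_carrier] by simp
    also have "\<dots> = A a0 $$ (c, N + t)" using True f carrier_matD[OF A_carrier] by simp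
    also have "\<dots> = (if tau c = t then 1 else 0)" using A0_index[OF True f] by simp
    finally show ?thesis using True by simp
  next
    case False
    then show ?thesis unfolding nv_index[OF c] AJ0 by simp
  qed
qed

lemma sum_blk_delta:
  "(\<Sum>c<M. if k*M + c = x then (X::complex) else 0) = (if x div M = k then X else 0)"
proof -
  have e: "(k*M + c = x) \<longleftrightarrow> (x div M = k \<and> c = x mod M)" if "c < M" for c
  proof
    assume "k*M + c = x"
    then show "x div M = k \<and> c = x mod M" using that M0 by auto
  next
    assume "x div M = k \<and> c = x mod M"
    then show "k*M + c = x" by (metis div_mult_mod_eq mult.commute)
  qed
  have "(\<Sum>c<M. if k*M + c = x then X else 0) = (\<Sum>c<M. if x div M = k \<and> c = x mod M then X else 0)"
    using e by (intro sum.cong) auto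
  also have "\<dots> = (if x div M = k then X else 0)"
    using M0 by (cases "x div M = k") (simp_all add: sum.delta')
  finally show ?thesis .
qed

lemma W0_index:
  assumes i: "i < N" and k: "k < K" and t: "t < r"
  shows "W a0 $$ (i, k*r+t) = (if tau i = t then (if (N+t) div M = k then 1 else 0) - (if i div M = k then 1 else 0) else 0)"
proof -
  have "W a0 $$ (i, k*r+t) = (\<Sum>c<M. A a0 $$ (i, k*M + c) * nv a0 t $ (k*M + c))"
    using W_index[OF i kr_lt[OF k t]] kr_div[OF t] kr_mod[OF t] by simp
  also have "\<dots> = (\<Sum>c<M. (if k*M + c = i then (if tau i = t then -1 else 0) else 0)
                        + (if k*M + c = N + t then (if tau i = t then 1 else 0) else 0))"
  proof (intro sum.cong refl)
    fix c assume "c \<in> {..<M}"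
    then have c: "k*M + c < K*M" using blk_lt[OF k] by simp
    show "A a0 $$ (i, k*M + c) * nv a0 t $ (k*M + c) =
      (if k*M + c = i then (if tau i = t then -1 else 0) else 0) + (if k*M + c = N + t then (if tau i = t then 1 else 0) else 0)"
      unfolding A0_index[OF i c] nv0_index[OF c t] using i by auto
  qed
  also have "\<dots> = (if i div M = k then (if tau i = t then -1 else 0) else 0) + (if (N+t) div M = k then (if tau i = t then 1 else 0) else 0)"
    by (simp add: sum.distrib sum_blk_delta)
  finally show ?thesis by auto
qed

end

context setting begin

definition Iw where "Iw = {i. i < N \<and> tau i < r}"
definition sig :: "nat \<Rightarrow> nat" where "sig i = (i div M)*r + tau i"
definition Jw where "Jw = sig ` Iw"

lemma q_lt: "q < K" unfolding q_def using KMN M0 by (simp add: div_less_iff_less_mult mult.commute)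

lemma N_eq: "N = q*M + s" unfolding q_def s_def by simp

lemma blk_le: "i < N \<Longrightarrow> i div M \<le> q" unfolding q_def by (simp add: div_le_mono)

lemma blk_q: "i < N \<Longrightarrow> \<not> i div M < q \<Longrightarrow> i div M = q \<and> i mod M < s"
proof -
  assume i: "i < N" and nq: "\<not> i div M < q"
  then have b: "i div M = q" using blk_le[OF i] by simp
  have "i = q*M + i mod M" using b by (metis div_mult_mod_eq)
  then have "i mod M < s" using i N_eq by linarith
  then show ?thesis using b by simp
qed

lemma tau_lt_M: "i < N \<Longrightarrow> tau i < M"
proof -
  assume i: "i < N"
  show ?thesis
  proof (cases "i div M < q")
    case True then show ?thesis unfolding tau_def using M0 by simp
  next
    case False
    then have "i mod M < s" using blk_q[OF i] by simp
    moreover have "s \<le> M" unfolding s_def using M0 by (simp add: less_imp_le)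
    ultimately show ?thesis unfolding tau_def using False by simp
  qed
qed

lemma C1: "i < N \<Longrightarrow> (N + tau i) div M \<noteq> i div M"
proof -
  assume i: "i < N"
  show ?thesis
  proof (cases "i div M < q")
    case True
    have "N div M \<le> (N + tau i) div M" by (simp add: div_le_mono)
    then show ?thesis using True unfolding q_def by simp
  next
    case False
    then have b: "i div M = q" and m: "i mod M < s" using blk_q[OF i] by auto
    have sM: "s < M" unfolding s_def using M0 by simp
    have "N + tau i = (q+1)*M + i mod M" unfolding tau_def using False N_eq sM by simp
    also have "\<dots> = i mod M + (q+1)*M" by simp
    finally have e: "N + tau i = i mod M + (q+1)*M" .
    have "(i mod M + (q+1)*M) div M = (q+1) + (i mod M) div M"
      using M0 by (intro div_mult_self1) simp
    then have "(N + tau i) div M = q + 1" unfolding e using M0 by simp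
    then show ?thesis using b by simp
  qed
qed

lemma C2: "i div M = i' div M \<Longrightarrow> tau i = tau i' \<Longrightarrow> i = i'"
proof -
  assume b: "i div M = i' div M" and t: "tau i = tau i'"
  have "i mod M = i' mod M"
    using t b unfolding tau_def by (cases "i div M < q") auto
  then show ?thesis using b by (metis div_mult_mod_eq)
qed

lemma Iw_sub: "Iw \<subseteq> {..<N}" unfolding Iw_def by auto
lemma Iw_fin: "finite Iw" using Iw_sub finite_subset by blast

lemma sig_div: "t < r \<Longrightarrow> ((b::nat)*r + t) div r = b" using r_pos by simp

lemma sig_mono: "strict_mono_on Iw sig"
proof (rule strict_mono_onI)
  fix i i' assume i: "i \<in> Iw" and i': "i' \<in> Iw" and lt: "i < i'"
  have ti: "tau i < r" "tau i' < r" using i i' unfolding Iw_def by auto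
  have iN: "i < N" "i' < N" using i i' unfolding Iw_def by auto
  have ble: "i div M \<le> i' div M" using lt by (simp add: div_le_mono)
  show "sig i < sig i'"
  proof (cases "i div M = i' div M")
    case True
    have "i mod M < i' mod M"
    proof (rule ccontr)
      assume "\<not> i mod M < i' mod M"
      then have "i' mod M \<le> i mod M" by simp
      then have "i' \<le> i" using True by (metis div_mult_mod_eq add_le_cancel_left)
      then show False using lt by simp
    qed
    then have "tau i < tau i'" unfolding tau_def using True by auto
    then show ?thesis unfolding sig_def using True by simp
  next
    case False
    then have b: "i div M + 1 \<le> i' div M" using ble by simp
    have "sig i < (i div M)*r + r" unfolding sig_def using ti by simp
    also have "\<dots> = (i div M + 1) * r" by simp
    also have "\<dots> \<le> (i' div M) * r" using b by (intro mult_right_mono) auto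
    also have "\<dots> \<le> sig i'" unfolding sig_def by simp
    finally show ?thesis .
  qed
qed

lemma sig_lt: "i \<in> Iw \<Longrightarrow> sig i < K*r"
proof -
  assume i: "i \<in> Iw"
  then have "i div M < K" using blk_le[of i] q_lt unfolding Iw_def by fastforce
  moreover have "tau i < r" using i unfolding Iw_def by simp
  ultimately show ?thesis unfolding sig_def by (rule lt_blk)
qed

lemma W0_sig:
  assumes i: "i \<in> Iw" and i': "i' \<in> Iw"
  shows "W a0 $$ (i, sig i') = (if i = i' then -1 else 0)"
proof -
  have iN: "i < N" "i' < N" using i i' unfolding Iw_def by auto
  have t': "tau i' < r" using i' unfolding Iw_def by simp
  have k': "i' div M < K" using blk_le[OF iN(2)] q_lt by simp
  have "W a0 $$ (i, sig i') = (if tau i = tau i' then (if (N + tau i') div M = i' div M then 1 else 0)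
      - (if i div M = i' div M then 1 else 0) else 0)"
    unfolding sig_def by (rule W0_index[OF iN(1) k' t'])
  also have "\<dots> = (if i = i' then -1 else 0)"
    using C1[OF iN(2)] C2[of i i'] by auto
  finally show ?thesis .
qed

lemma KM_eq: "K*M = (K-1)*M + M"
proof -
  have "K = Suc (K-1)" using K2 by simp
  then have "K*M = Suc (K-1) * M" by simp
  then show ?thesis by simp
qed

lemma card_Iw: "card Iw = min ((K-1)*r) N"
proof (cases "(K-1)*M \<le> N")
  case True
  have qK: "q = K - 1"
  proof -
    have "(K-1)*M div M \<le> N div M" using True by (rule div_le_mono)
    then have "K - 1 \<le> q" unfolding q_def using M0 by simp
    then show ?thesis using q_lt by simp
  qed
  have sr: "M - s = r"
  proof -
    have "N = (K-1)*M + s" using N_eq qK by simp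
    moreover note KM_eq
    ultimately show ?thesis unfolding r_def by simp
  qed
  have rM: "r \<le> M" using sr by simp
  have I_eq: "Iw = (\<lambda>(k,t). k*M + t) ` ({..<K-1} \<times> {..<r})"
  proof (rule Set.set_eqI)
    fix i
    show "i \<in> Iw \<longleftrightarrow> i \<in> (\<lambda>(k,t). k*M + t) ` ({..<K-1} \<times> {..<r})"
    proof
      assume i: "i \<in> Iw"
      then have iN: "i < N" and ti: "tau i < r" unfolding Iw_def by auto
      have b: "i div M < q"
      proof (rule ccontr)
        assume "\<not> i div M < q"
        then have "tau i = M - s + i mod M" unfolding tau_def by simp
        then show False using ti sr by simp
      qed
      then have "i mod M < r" using ti unfolding tau_def by simp
      moreover have "i = (i div M)*M + i mod M" by simp
      ultimately show "i \<in> (\<lambda>(k,t). k*M + t) ` ({..<K-1} \<times> {..<r})"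
        using b qK by (intro image_eqI[of _ _ "(i div M, i mod M)"]) auto
    next
      assume "i \<in> (\<lambda>(k,t). k*M + t) ` ({..<K-1} \<times> {..<r})"
      then obtain k t where kt: "k < K-1" "t < r" "i = k*M + t" by auto
      have tM: "t < M" using kt rM by simp
      have d: "i div M = k" "i mod M = t" using kt tM by simp_all
      have "i < (K-1)*M" using lt_blk[OF kt(1) tM] kt by simp
      then have "i < N" using True by simp
      moreover have "tau i < r" unfolding tau_def using d kt qK by simp
      ultimately show "i \<in> Iw" unfolding Iw_def by simp
    qed
  qed
  have inj: "inj_on (\<lambda>(k,t). k*M + t) ({..<K-1} \<times> {..<r})"
  proof (rule inj_onI)
    fix x y assume x: "x \<in> {..<K-1} \<times> {..<r}" and y: "y \<in> {..<K-1} \<times> {..<r}"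
      and e: "(\<lambda>(k,t). k*M + t) x = (\<lambda>(k,t). k*M + t) y"
    obtain k t where xk: "x = (k,t)" by (cases x)
    obtain k' t' where yk: "y = (k',t')" by (cases y)
    have "t < M" "t' < M" using x y xk yk rM by auto
    then have "(k*M+t) div M = k" "(k*M+t) mod M = t" "(k'*M+t') div M = k'" "(k'*M+t') mod M = t'"
      by simp_all
    then show "x = y" using e xk yk by auto
  qed
  have "card Iw = (K-1)*r" unfolding I_eq using card_image[OF inj] by (simp add: card_cartesian_product)
  moreover have "(K-1)*r \<le> N" using mult_le_mono2[OF rM, of "K-1"] True by linarith
  ultimately show ?thesis by simp
next
  case False
  have rM: "M < r" unfolding r_def using False KM_eq by linarith
  have I_eq: "Iw = {..<N}" unfolding Iw_def using tau_lt_M rM by (auto intro: less_trans)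
  have "N \<le> (K-1)*r"
  proof -
    have "N < (K-1)*M" using False by simp
    also have "\<dots> \<le> (K-1)*r" using rM by simp
    finally show ?thesis by simp
  qed
  then show ?thesis unfolding I_eq by simp
qed

end

context setting begin

lemma card_Jw: "card Jw = card Iw"
  unfolding Jw_def using strict_mono_on_imp_inj_on[OF sig_mono] by (rule card_image)

lemma rows_Iw: "{i. i < N \<and> i \<in> Iw} = Iw" unfolding Iw_def by auto
lemma cols_Jw: "{j. j < K*r \<and> j \<in> Jw} = Jw" unfolding Jw_def using sig_lt by auto

definition p :: "(nat \<times> nat \<times> nat \<Rightarrow> complex) \<Rightarrow> complex" where
  "p a = det (submatrix (W a) Iw Jw)"

lemma p_pf: "p \<in> pf Iset"
proof -
  have "pfm Iset (card Iw) (card Iw) (\<lambda>a. submatrix (W a) Iw Jw)"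
    using sub_pfm[of Iw Jw] unfolding rows_Iw cols_Jw card_Jw .
  from pfm_det[OF this] show ?thesis unfolding p_def[abs_def] .
qed

lemma sub0: "submatrix (W a0) Iw Jw = (-1) \<cdot>\<^sub>m 1\<^sub>m (card Iw)"
proof (rule eq_matI)
  have d: "dim_row (W a0) = N" "dim_col (W a0) = K*r" using carrier_matD[OF W_carrier] by auto
  show dr: "dim_row (submatrix (W a0) Iw Jw) = dim_row ((-1) \<cdot>\<^sub>m 1\<^sub>m (card Iw))"
    unfolding dim_submatrix d rows_Iw by simp
  show dc: "dim_col (submatrix (W a0) Iw Jw) = dim_col ((-1) \<cdot>\<^sub>m 1\<^sub>m (card Iw))"
    unfolding dim_submatrix d cols_Jw card_Jw by simp
  fix m m' assume m: "m < dim_row ((-1) \<cdot>\<^sub>m 1\<^sub>m (card Iw))" and m': "m' < dim_col ((-1) \<cdot>\<^sub>m 1\<^sub>m (card Iw))"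
  then have m1: "m < card Iw" and m2: "m' < card Iw" by auto
  have pm: "pick Iw m \<in> Iw" "pick Iw m' \<in> Iw" using pick_in_set_le m1 m2 by auto
  have pJ: "pick Jw m' = sig (pick Iw m')" unfolding Jw_def by (rule pick_image[OF Iw_fin sig_mono m2])
  have inj: "pick Iw m = pick Iw m' \<longleftrightarrow> m = m'"
  proof
    assume e: "pick Iw m = pick Iw m'"
    show "m = m'"
    proof (rule ccontr)
      assume "m \<noteq> m'"
      then have "m < m' \<or> m' < m" by auto
      then show False using pick_mono_le[OF m2, of m] pick_mono_le[OF m1, of m'] e by auto
    qed
  qed simp
  have "submatrix (W a0) Iw Jw $$ (m, m') = W a0 $$ (pick Iw m, pick Jw m')"
    by (rule submatrix_index) (simp_all only: d rows_Iw cols_Jw card_Jw m1 m2)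
  also have "\<dots> = (if m = m' then -1 else 0)" unfolding pJ W0_sig[OF pm] inj ..
  also have "\<dots> = ((-1) \<cdot>\<^sub>m 1\<^sub>m (card Iw)) $$ (m, m')" using m1 m2 by simp
  finally show "submatrix (W a0) Iw Jw $$ (m, m') = ((-1) \<cdot>\<^sub>m 1\<^sub>m (card Iw)) $$ (m, m')" .
qed

lemma p_a0: "p a0 \<noteq> 0"
  unfolding p_def sub0 by simp

lemma good:
  assumes pa: "p a \<noteq> 0" and nb: "null_basis_mat (A a) U r"
  shows "vec_space.rank N (Atilde K N M a U) = min ((K-1)*r) N"
proof -
  interpret V: vec_space "TYPE(complex)" N .
  have "card {j. j < K*r \<and> j \<in> Jw} \<le> V.rank (W a)"
    using V.rank_gt_minor[OF W_carrier] pa unfolding p_def by blast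
  then have "min ((K-1)*r) N \<le> V.rank (W a)" unfolding cols_Jw card_Jw card_Iw .
  also have "\<dots> \<le> V.rank (Atilde K N M a U)" by (rule rank_W_le[OF nb])
  finally have lo: "min ((K-1)*r) N \<le> V.rank (Atilde K N M a U)" .
  show ?thesis by (rule antisym[OF rank_At_le[OF nb] lo])
qed

end

theorem lemma3:
  fixes K M N :: nat and P :: "(nat \<times> nat \<times> nat \<Rightarrow> complex) measure"
  assumes "K \<ge> 2" and "0 < M" and "M \<le> N" and "K * M > N"
    and "prob_space P"
    and "sets P = sets (entry_space K N M)"
    and "absolutely_continuous (entry_space K N M) P"
  shows "AE a in P. \<forall>U. null_basis_mat (Amat K N M a) U (K * M - N) \<longrightarrow>
            vec_space.rank N (Atilde K N M a U) = min ((K - 1) * (K * M - N)) N"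
proof -
  interpret S: setting K N M using assms(1-4) by unfold_locales auto
  have rr: "K * M - N = S.r" by (simp add: S.r_def)
  have ent: "entry_space K N M = PiM S.Iset (\<lambda>_. lborel)" unfolding entry_space_def S.Iset_def by simp
  have fin: "finite S.Iset" unfolding S.Iset_def by simp
  have Z: "{a \<in> space (entry_space K N M). S.p a = 0} \<in> null_sets (entry_space K N M)"
    unfolding ent by (rule pf_null[OF fin S.p_pf S.p_a0])
  then have ZP: "{a \<in> space (entry_space K N M). S.p a = 0} \<in> null_sets P"
    using assms(7) unfolding absolutely_continuous_def by blast
  have sp: "space P = space (entry_space K N M)" using assms(6) by (rule sets_eq_imp_space_eq)
  show ?thesis unfolding rr
  proof (rule AE_I'[OF ZP])
    show "{a \<in> space P. \<not> (\<forall>U. null_basis_mat (Amat K N M a) U S.r \<longrightarrow>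
            vec_space.rank N (Atilde K N M a U) = min ((K - 1) * S.r) N)}
        \<subseteq> {a \<in> space (entry_space K N M). S.p a = 0}"
      using S.good sp by blast
  qed
qed

end
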